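(* Let $f$ be a non-constant meromorphic function of finite $\varphi$-order, let $a\in\widehat{\mathbb{C}}$, and write $n(r)=n(r,a,f)$, $N(r)=N(r,a,f)$. Then $$\rho_\varphi(N(r))\le\rho_\varphi(n(r))+\beta_\varphi,\qquad \rho_\varphi(N(r))\ge\alpha_{\varphi,s}\rho_\varphi(n(r))+\alpha_{\varphi,s}\gamma_{\varphi,s}.$$
   Context: Let $R_0>0$. $\varphi:(R_0,\infty)\to(0,\infty)$ is a non-decreasing unbounded function with $\log r\le\varphi(r)\le r$ for $r\ge R_0$; $s:(R_0,\infty)\to(0,\infty)$ is non-decreasing with $r<s(r)\le r^2$ for $r\ge R_0$ and $\liminf_{r\to\infty}s(r)/r>1$. For a non-negative non-decreasing function $g$, $\rho_\varphi(g)=\limsup_{r\to\infty}\frac{\log g(r)}{\log\varphi(r)}$; for meromorphic $f$, $\rho_\varphi(f)=\rho_\varphi(T(r,f))$. $n(r,a,f)$ counts $a$-points in $|z|\le r$ with multiplicity and $N(r,a,f)$ is the integrated counting function. Define $$\alpha_{\varphi,s}=\liminf_{r\to\infty}\frac{\log\varphi(r)}{\log\varphi(s(r))},\quad \beta_\varphi=\limsup_{r\to\infty}\frac{\log\log r}{\log\varphi(r)},\quad \gamma_{\varphi,s}=\liminf_{r\to\infty}\frac{\log\log\frac{s(r)}{r}}{\log\varphi(r)}.$$ *)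

theory Defs
  imports "HOL-Complex_Analysis.Complex_Analysis" "HOL-Library.Extended_Real"
begin

text \<open>Points of the extended plane: None = infinity, Some c = the finite point c.\<close>

definition apoints :: "(complex \<Rightarrow> complex) \<Rightarrow> complex option \<Rightarrow> complex set" where
  "apoints f a = (case a of None \<Rightarrow> {z. is_pole f z}
                            | Some c \<Rightarrow> {z. \<not> is_pole f z \<and> f z = c})"

definition amult :: "(complex \<Rightarrow> complex) \<Rightarrow> complex option \<Rightarrow> complex \<Rightarrow> nat" where
  "amult f a z = (case a of None \<Rightarrow> nat (- zorder f z)
                            | Some c \<Rightarrow> nat (zorder (\<lambda>w. f w - c) z))"

definition ncount :: "(complex \<Rightarrow> complex) \<Rightarrow> complex option \<Rightarrow> real \<Rightarrow> real" where
  "ncount f a r = real (\<Sum>z\<in>{z\<in>apoints f a. cmod z \<le> r}. amult f a z)"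

definition Ncount :: "(complex \<Rightarrow> complex) \<Rightarrow> complex option \<Rightarrow> real \<Rightarrow> real" where
  "Ncount f a r = integral {0..r} (\<lambda>t. (ncount f a t - ncount f a 0) / t)
                  + ncount f a 0 * ln r"

definition ln_plus :: "real \<Rightarrow> real" where
  "ln_plus x = (if x \<le> 1 then 0 else ln x)"

definition mprox :: "(complex \<Rightarrow> complex) \<Rightarrow> real \<Rightarrow> real" where
  "mprox f r = integral {0..2*pi} (\<lambda>\<theta>. ln_plus (cmod (f (of_real r * cis \<theta>)))) / (2*pi)"

definition nev_T :: "(complex \<Rightarrow> complex) \<Rightarrow> real \<Rightarrow> real" where
  "nev_T f r = mprox f r + Ncount f None r"

definition eln :: "real \<Rightarrow> ereal" where
  "eln x = (if x > 0 then ereal (ln x) else -\<infinity>)"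

definition rho_phi :: "(real \<Rightarrow> real) \<Rightarrow> (real \<Rightarrow> real) \<Rightarrow> ereal" where
  "rho_phi \<phi> g = Limsup at_top (\<lambda>r. eln (g r) / ereal (ln (\<phi> r)))"

definition alpha_phi_s :: "(real \<Rightarrow> real) \<Rightarrow> (real \<Rightarrow> real) \<Rightarrow> ereal" where
  "alpha_phi_s \<phi> s = Liminf at_top (\<lambda>r. ereal (ln (\<phi> r) / ln (\<phi> (s r))))"

definition beta_phi :: "(real \<Rightarrow> real) \<Rightarrow> ereal" where
  "beta_phi \<phi> = Limsup at_top (\<lambda>r. ereal (ln (ln r) / ln (\<phi> r)))"

definition gamma_phi_s :: "(real \<Rightarrow> real) \<Rightarrow> (real \<Rightarrow> real) \<Rightarrow> ereal" where
  "gamma_phi_s \<phi> s = Liminf at_top (\<lambda>r. ereal (ln (ln (s r / r)) / ln (\<phi> r)))"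

end

theory Submission
  imports Defs
begin


lemma apoints_finite:
  assumes f_mero: "f nicely_meromorphic_on UNIV"
    and f_nonconst: "\<not> (\<exists>c. \<forall>z. f z = c)"
  shows "finite {z\<in>apoints f a. cmod z \<le> r}"
proof -
  have sp: "apoints f a sparse_in UNIV"
  proof (cases a)
    case None
    have "eventually (\<lambda>z. \<not>is_pole f z) (cosparse UNIV)"
      by (rule meromorphic_on_imp_not_pole_cosparse) (use f_mero in \<open>auto simp: nicely_meromorphic_on_def\<close>)
    then show ?thesis using None by (simp add: eventually_cosparse apoints_def)
  next
    case (Some c)
    have "(\<forall>x\<in>UNIV. f x = c) \<or> (\<forall>\<^sub>\<approx>x\<in>UNIV. f x \<noteq> c)"
      by (rule nicely_meromorphic_imp_constant_or_avoid) (use f_mero in auto)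
    with f_nonconst have "{x. \<not> f x \<noteq> c} sparse_in UNIV"
      by (auto simp: eventually_cosparse)
    then show ?thesis using Some
      by (elim sparse_in_subset2) (auto simp: apoints_def)
  qed
  have "finite (cball 0 r \<inter> apoints f a)"
    by (rule sparse_in_compact_finite) (use sparse_in_subset[OF sp] in auto)
  moreover have "{z\<in>apoints f a. cmod z \<le> r} = cball 0 r \<inter> apoints f a" by auto
  ultimately show ?thesis by simp
qed



lemma ncount_sub:
  assumes fin: "\<And>r. finite {z\<in>apoints f a. cmod z \<le> r}" and "t \<le> R"
  shows "ncount f a t = (\<Sum>z\<in>{z\<in>apoints f a. cmod z \<le> R}. if cmod z \<le> t then real (amult f a z) else 0)"
proof -
  have "(\<Sum>z\<in>{z\<in>apoints f a. cmod z \<le> R}. if cmod z \<le> t then real (amult f a z) else 0)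
     = (\<Sum>z\<in>{z\<in>{z\<in>apoints f a. cmod z \<le> R}. cmod z \<le> t}. real (amult f a z))"
    by (rule sum.inter_filter[symmetric, OF fin])
  also have "{z\<in>{z\<in>apoints f a. cmod z \<le> R}. cmod z \<le> t} = {z\<in>apoints f a. cmod z \<le> t}"
    using assms(2) by auto
  finally show ?thesis by (simp add: ncount_def)
qed

lemma ncount_nonneg: "ncount f a t \<ge> 0" unfolding ncount_def by (rule of_nat_0_le_iff)

lemma ncount_mono:
  assumes fin: "\<And>r. finite {z\<in>apoints f a. cmod z \<le> r}" and "t \<le> R"
  shows "ncount f a t \<le> ncount f a R"
  unfolding ncount_def of_nat_le_iff
  by (rule sum_mono2[OF fin]) (use assms(2) in auto)

lemma ncount_nat: "\<exists>k::nat. ncount f a t = real k" unfolding ncount_def by (rule exI) (rule refl)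

lemma ncount_split0:
  assumes fin: "\<And>r. finite {z\<in>apoints f a. cmod z \<le> r}" and "0 \<le> t"
  shows "ncount f a t = (\<Sum>z\<in>{z\<in>apoints f a. cmod z \<le> t} - {0}. real (amult f a z)) + ncount f a 0"
proof -
  have A: "{z\<in>apoints f a. cmod z \<le> t} \<inter> {0} = {z\<in>apoints f a. cmod z \<le> 0}" using assms(2) by auto
  show ?thesis
    unfolding ncount_def of_nat_sum
    using sum.Int_Diff[OF fin, of "\<lambda>z. real (amult f a z)" t "{0}"] A by simp
qed

lemma ncount_integral:
  assumes fin: "\<And>r. finite {z\<in>apoints f a. cmod z \<le> r}" and R: "R > 0"
  shows "((\<lambda>t. (ncount f a t - ncount f a 0) / t) has_integral
      (\<Sum>z\<in>{z\<in>apoints f a. cmod z \<le> R} - {0}. real (amult f a z) * ln (R / cmod z))) {0..R}"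
proof -
  let ?S = "{z\<in>apoints f a. cmod z \<le> R} - {0}"
  have finS: "finite ?S" using fin by simp
  have each: "((\<lambda>t. real (amult f a z) * (if t \<in> {cmod z..R} then 1 / t else 0)) has_integral
       real (amult f a z) * ln (R / cmod z)) {0..R}" if z: "z \<in> ?S" for z
  proof -
    have zp: "cmod z > 0" "cmod z \<le> R" using z by auto
    have "((\<lambda>t. 1 / t) has_integral (ln R - ln (cmod z))) {cmod z..R}"
    proof (rule fundamental_theorem_of_calculus)
      show "cmod z \<le> R" by fact
      fix x assume x: "x \<in> {cmod z..R}"
      have "x > 0" using zp(1) x[unfolded atLeastAtMost_iff] by linarith
      thus "(ln has_vector_derivative 1 / x) (at x within {cmod z..R})"
        by (auto intro!: derivative_eq_intros simp: has_real_derivative_iff_has_vector_derivative[symmetric])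
    qed
    hence "((\<lambda>t. if t \<in> {cmod z..R} then 1 / t else 0) has_integral (ln R - ln (cmod z))) {0..R}"
      using has_integral_restrict_closed_subinterval[of "\<lambda>t. 1/t" "ln R - ln (cmod z)" "cmod z" R 0 R] zp
      by simp
    moreover have "ln R - ln (cmod z) = ln (R / cmod z)" using zp R by (simp add: ln_div)
    ultimately show ?thesis by (intro has_integral_mult_right) simp
  qed
  have "((\<lambda>t. \<Sum>z\<in>?S. real (amult f a z) * (if t \<in> {cmod z..R} then 1 / t else 0)) has_integral
      (\<Sum>z\<in>?S. real (amult f a z) * ln (R / cmod z))) {0..R}"
    by (rule has_integral_sum[OF finS]) (use each in auto)
  moreover have "(\<Sum>z\<in>?S. real (amult f a z) * (if t \<in> {cmod z..R} then 1 / t else 0))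
        = (ncount f a t - ncount f a 0) / t" if t: "t \<in> {0..R}" for t
  proof (cases "t = 0")
    case True
    have "(\<Sum>z\<in>?S. real (amult f a z) * (if t \<in> {cmod z..R} then 1 / t else 0)) = 0"
      by (rule sum.neutral) (use True in auto)
    then show ?thesis using True by simp
  next
    case False
    hence tp: "t > 0" using t by auto
    have "ncount f a t - ncount f a 0 = (\<Sum>z\<in>{z\<in>apoints f a. cmod z \<le> t} - {0}. real (amult f a z))"
      using ncount_split0[OF fin, of t] tp by simp
    also have "\<dots> = (\<Sum>z\<in>?S. if cmod z \<le> t then real (amult f a z) else 0)"
    proof -
      have "(\<Sum>z\<in>?S. if cmod z \<le> t then real (amult f a z) else 0) = (\<Sum>z\<in>{z\<in>?S. cmod z \<le> t}. real (amult f a z))"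
        by (rule sum.inter_filter[symmetric, OF finS])
      also have "{z\<in>?S. cmod z \<le> t} = {z\<in>apoints f a. cmod z \<le> t} - {0}" using t by auto
      finally show ?thesis by simp
    qed
    finally have "(ncount f a t - ncount f a 0) / t = (\<Sum>z\<in>?S. if cmod z \<le> t then real (amult f a z) else 0) / t" by simp
    also have "\<dots> = (\<Sum>z\<in>?S. real (amult f a z) * (if t \<in> {cmod z..R} then 1 / t else 0))"
      unfolding sum_divide_distrib using t by (intro sum.cong) auto
    finally show ?thesis by simp
  qed
  ultimately show ?thesis by (rule has_integral_eq[rotated]) auto
qed



lemma Ncount_eq:
  assumes fin: "\<And>r. finite {z\<in>apoints f a. cmod z \<le> r}" and R: "R > 0"
  shows "Ncount f a R = (\<Sum>z\<in>{z\<in>apoints f a. cmod z \<le> R} - {0}. real (amult f a z) * ln (R / cmod z))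
            + ncount f a 0 * ln R"
  unfolding Ncount_def using integral_unique[OF ncount_integral[OF fin R]] by simp

lemma N_lower:
  assumes fin: "\<And>r. finite {z\<in>apoints f a. cmod z \<le> r}" and r: "1 \<le> r" "r \<le> R"
  shows "Ncount f a R \<ge> ncount f a r * ln (R / r)"
proof -
  have R: "R > 0" using r by auto
  have "ncount f a r * ln (R / r) = (\<Sum>z\<in>{z\<in>apoints f a. cmod z \<le> r} - {0}. real (amult f a z) * ln (R / r))
        + ncount f a 0 * ln (R / r)"
    using ncount_split0[OF fin, of r] r by (simp add: sum_distrib_right sum_distrib_left algebra_simps)
  also have "\<dots> \<le> (\<Sum>z\<in>{z\<in>apoints f a. cmod z \<le> r} - {0}. real (amult f a z) * ln (R / cmod z))
        + ncount f a 0 * ln R"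
  proof (intro add_mono sum_mono mult_left_mono)
    fix z assume z: "z \<in> {z\<in>apoints f a. cmod z \<le> r} - {0}"
    hence "cmod z > 0" "cmod z \<le> r" by auto
    thus "ln (R / r) \<le> ln (R / cmod z)" using R r by (simp add: frac_le)
  next
    show "ln (R / r) \<le> ln R" using R r by (simp add: ln_div)
  qed (auto simp: ncount_nonneg)
  also have "\<dots> \<le> (\<Sum>z\<in>{z\<in>apoints f a. cmod z \<le> R} - {0}. real (amult f a z) * ln (R / cmod z))
        + ncount f a 0 * ln R"
  proof (intro add_mono order.refl sum_mono2)
    show "finite ({z \<in> apoints f a. cmod z \<le> R} - {0})" using fin by simp
    show "{z \<in> apoints f a. cmod z \<le> r} - {0} \<subseteq> {z \<in> apoints f a. cmod z \<le> R} - {0}" using r by auto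
    fix z assume "z \<in> {z \<in> apoints f a. cmod z \<le> R} - {0} - ({z \<in> apoints f a. cmod z \<le> r} - {0})"
    hence "cmod z > 0" "cmod z \<le> R" by auto
    thus "0 \<le> real (amult f a z) * ln (R / cmod z)" by (intro mult_nonneg_nonneg) auto
  qed
  also have "\<dots> = Ncount f a R" using Ncount_eq[OF fin R] by simp
  finally show ?thesis .
qed

lemma N_upper:
  assumes fin: "\<And>r. finite {z\<in>apoints f a. cmod z \<le> r}" and R: "1 \<le> R"
  shows "Ncount f a R \<le> ncount f a R * ln R
     + (\<Sum>z\<in>{z\<in>apoints f a. cmod z \<le> 1} - {0}. real (amult f a z) * max 0 (- ln (cmod z)))"
proof -
  let ?g = "\<lambda>z. real (amult f a z) * max 0 (- ln (cmod z))"
  have "Ncount f a R = (\<Sum>z\<in>{z\<in>apoints f a. cmod z \<le> R} - {0}. real (amult f a z) * ln (R / cmod z))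
            + ncount f a 0 * ln R" using Ncount_eq[OF fin, of R] R by simp
  also have "\<dots> \<le> (\<Sum>z\<in>{z\<in>apoints f a. cmod z \<le> R} - {0}. real (amult f a z) * ln R + ?g z)
            + ncount f a 0 * ln R"
  proof (intro add_mono order.refl sum_mono)
    fix z assume "z \<in> {z\<in>apoints f a. cmod z \<le> R} - {0}"
    hence z: "cmod z > 0" by auto
    have "ln (R / cmod z) = ln R - ln (cmod z)" using z R by (simp add: ln_div)
    also have "\<dots> \<le> ln R + max 0 (- ln (cmod z))" by simp
    finally show "real (amult f a z) * ln (R / cmod z) \<le> real (amult f a z) * ln R + ?g z"
      by (simp add: distrib_left[symmetric] mult_left_mono)
  qed
  also have "(\<Sum>z\<in>{z\<in>apoints f a. cmod z \<le> R} - {0}. ?g z)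
       = (\<Sum>z\<in>{z\<in>apoints f a. cmod z \<le> 1} - {0}. ?g z)"
  proof (rule sum.mono_neutral_right)
    show "finite ({z \<in> apoints f a. cmod z \<le> R} - {0})" using fin by simp
    show "{z \<in> apoints f a. cmod z \<le> 1} - {0} \<subseteq> {z \<in> apoints f a. cmod z \<le> R} - {0}" using R by auto
    show "\<forall>i\<in>{z \<in> apoints f a. cmod z \<le> R} - {0} - ({z \<in> apoints f a. cmod z \<le> 1} - {0}). ?g i = 0"
    proof
      fix i assume "i \<in> {z \<in> apoints f a. cmod z \<le> R} - {0} - ({z \<in> apoints f a. cmod z \<le> 1} - {0})"
      hence "cmod i > 1" by auto
      hence "ln (cmod i) > 0" by (intro ln_gt_zero)
      thus "?g i = 0" by simp
    qed
  qed
  hence "(\<Sum>z\<in>{z\<in>apoints f a. cmod z \<le> R} - {0}. real (amult f a z) * ln R + ?g z)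
        + ncount f a 0 * ln R = ncount f a R * ln R + (\<Sum>z\<in>{z\<in>apoints f a. cmod z \<le> 1} - {0}. ?g z)"
    using ncount_split0[OF fin, of R] R by (simp add: sum.distrib sum_distrib_right sum_distrib_left algebra_simps)
  finally show ?thesis .
qed

lemma K_nonneg: "0 \<le> (\<Sum>z\<in>A. real (amult f a z) * max 0 (- ln (cmod z)))"
  by (intro sum_nonneg mult_nonneg_nonneg) auto


lemma ratio_eq: "x > 0 \<Longrightarrow> L > 0 \<Longrightarrow> eln x / ereal L = ereal (ln x / L)"
  by (simp add: eln_def)
lemma ratio_zero: "L > 0 \<Longrightarrow> eln 0 / ereal L = -\<infinity>"
  by (simp add: eln_def)
lemma freq_of_Limsup:
  fixes f :: "_ \<Rightarrow> ereal"
  assumes "c < Limsup F f" shows "frequently (\<lambda>x. f x > c) F"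
proof (rule ccontr)
  assume "\<not> frequently (\<lambda>x. f x > c) F"
  hence "eventually (\<lambda>x. f x \<le> c) F" by (simp add: not_frequently not_less)
  hence "Limsup F f \<le> c" by (rule Limsup_bounded)
  thus False using assms by simp
qed
lemma freq_transfer:
  fixes s :: "real \<Rightarrow> real"
  assumes "frequently (\<lambda>r. Q (s r)) at_top" "eventually (\<lambda>r. s r \<ge> r) at_top"
  shows "frequently Q at_top"
proof (rule ccontr)
  assume "\<not> frequently Q at_top"
  then obtain M where M: "\<And>R. R \<ge> M \<Longrightarrow> \<not> Q R"
    by (auto simp: not_frequently eventually_at_top_linorder)
  have "eventually (\<lambda>r. \<not> Q (s r)) at_top"
    using assms(2) eventually_ge_at_top[of M] by eventually_elim (use M in auto)
  with assms(1) show False by (simp add: not_frequently[symmetric])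
qed


theorem lemma4p2:
  fixes \<phi> s :: "real \<Rightarrow> real" and R0 :: real
    and f :: "complex \<Rightarrow> complex" and a :: "complex option"
  assumes R0: "R0 > 0"
    and phi_pos: "\<forall>r>R0. \<phi> r > 0"
    and phi_mono: "mono_on {R0<..} \<phi>"
    and phi_unbdd: "\<not> bdd_above (\<phi> ` {R0<..})"
    and phi_bounds: "\<forall>r>R0. ln r \<le> \<phi> r \<and> \<phi> r \<le> r"
    and s_pos: "\<forall>r>R0. s r > 0"
    and s_mono: "mono_on {R0<..} s"
    and s_bounds: "\<forall>r>R0. r < s r \<and> s r \<le> r\<^sup>2"
    and s_liminf: "Liminf at_top (\<lambda>r. ereal (s r / r)) > 1"
    and f_mero: "f nicely_meromorphic_on UNIV"
    and f_nonconst: "\<not> (\<exists>c. \<forall>z. f z = c)"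
    and f_order: "rho_phi \<phi> (nev_T f) < \<infinity>"
  shows "rho_phi \<phi> (Ncount f a) \<le> rho_phi \<phi> (ncount f a) + beta_phi \<phi>
     \<and> rho_phi \<phi> (Ncount f a) \<ge>
         (if rho_phi \<phi> (ncount f a) = -\<infinity> then -\<infinity>
          else alpha_phi_s \<phi> s * rho_phi \<phi> (ncount f a))
         + alpha_phi_s \<phi> s * gamma_phi_s \<phi> s"
proof -
  have fin: "\<And>r. finite {z\<in>apoints f a. cmod z \<le> r}"
    by (rule apoints_finite[OF f_mero f_nonconst])
  define n where "n = ncount f a"
  define N where "N = Ncount f a"
  define L where "L = (\<lambda>r. ln (\<phi> r))"
  define P where "P = rho_phi \<phi> n"
  define Q where "Q = rho_phi \<phi> N"
  define A where "A = alpha_phi_s \<phi> s"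
  define B where "B = beta_phi \<phi>"
  define G where "G = gamma_phi_s \<phi> s"
  have Lr: "\<And>r. L r = ln (\<phi> r)" by (simp add: L_def)
  have nonbot: "(at_top :: real filter) \<noteq> bot" by simp
  have phi_lim: "filterlim \<phi> at_top at_top"
  proof (subst filterlim_at_top, intro allI)
    fix Z
    obtain r0 where r0: "r0 > R0" "\<phi> r0 > Z"
      using phi_unbdd by (auto simp: bdd_above_def not_le)
    show "eventually (\<lambda>x. Z \<le> \<phi> x) at_top"
      using eventually_ge_at_top[of r0]
    proof eventually_elim
      case (elim x)
      have "\<phi> r0 \<le> \<phi> x" using phi_mono r0 elim by (auto intro: mono_onD)
      thus ?case using r0 by simp
    qed
  qed
  have L_lim: "filterlim L at_top at_top"
    unfolding L_def by (rule filterlim_compose[OF ln_at_top phi_lim])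
  have evL: "eventually (\<lambda>r. L r \<ge> M) at_top" for M
    using L_lim by (simp add: filterlim_at_top)
  have evR: "eventually (\<lambda>r. r > R0 \<and> r \<ge> exp 1) at_top"
    using eventually_gt_at_top[of R0] eventually_ge_at_top[of "exp 1"] by eventually_elim auto
  have ev_basic: "eventually (\<lambda>r. r > R0 \<and> r \<ge> exp 1 \<and> L r \<ge> 1 \<and> s r > r \<and> s r \<le> r\<^sup>2
        \<and> L (s r) \<ge> L r \<and> \<phi> r > 0 \<and> ln r \<ge> 1) at_top"
    using evR evL[of 1]
  proof eventually_elim
    case (elim r)
    have sr: "s r > r" "s r \<le> r\<^sup>2" using s_bounds elim by auto
    have "\<phi> r \<le> \<phi> (s r)" using phi_mono elim sr by (auto intro: mono_onD)
    moreover have "\<phi> r > 0" using phi_pos elim by auto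
    ultimately have "L (s r) \<ge> L r" unfolding L_def by simp
    moreover have "ln r \<ge> 1" using elim by (metis ln_exp ln_le_cancel_iff exp_gt_zero less_le_trans)
    ultimately show ?case using elim sr \<open>\<phi> r > 0\<close> by auto
  qed
  have A_ge0: "A \<ge> 0"
    unfolding A_def alpha_phi_s_def Lr[symmetric]
    by (rule Liminf_bounded) (use ev_basic in \<open>eventually_elim, auto intro!: divide_nonneg_nonneg\<close>)
  have A_le1: "A \<le> 1"
    unfolding A_def alpha_phi_s_def Lr[symmetric]
    by (rule Liminf_le[OF nonbot]) (use ev_basic in \<open>eventually_elim, auto simp: divide_le_eq_1\<close>)
  have G_le1: "G \<le> 1"
    unfolding G_def gamma_phi_s_def Lr[symmetric]
  proof (rule Liminf_le[OF nonbot])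
    show "eventually (\<lambda>r. ereal (ln (ln (s r / r)) / L r) \<le> 1) at_top"
      using ev_basic
    proof eventually_elim
      case (elim r)
      have r0: "r > 0" using elim R0 by auto
      have q1: "s r / r > 1" using elim r0 by simp
      have q2: "s r / r \<le> r" using elim r0 by (simp add: divide_le_eq power2_eq_square)
      have "ln (s r / r) > 0" using q1 by simp
      moreover have "ln (s r / r) \<le> ln r" using q1 q2 r0 by simp
      ultimately have "ln (ln (s r / r)) \<le> ln (ln r)" by simp
      also have "ln (ln r) \<le> L r" unfolding L_def using elim phi_bounds by auto
      finally show ?case using elim by simp
    qed
  qed
  have G_gt: "G > -\<infinity>"
  proof -
    obtain c' :: ereal where c': "1 < c'" "c' < Liminf at_top (\<lambda>r. ereal (s r / r))"
      using dense[OF s_liminf] by blast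
    then obtain c where c: "c' = ereal c" "c > 1"
      by (cases c') auto
    have ev1: "eventually (\<lambda>r. ereal (s r / r) > ereal c) at_top"
      using less_LiminfD[OF c'(2)] c by simp
    have "ereal (- \<bar>ln (ln c)\<bar>) \<le> G"
      unfolding G_def gamma_phi_s_def Lr[symmetric]
    proof (rule Liminf_bounded)
      show "eventually (\<lambda>r. ereal (- \<bar>ln (ln c)\<bar>) \<le> ereal (ln (ln (s r / r)) / L r)) at_top"
        using ev_basic ev1
      proof eventually_elim
        case (elim r)
        have "ln c > 0" using c by simp
        hence "ln (ln c) \<le> ln (ln (s r / r))" using elim c by simp
        hence h: "- \<bar>ln (ln c)\<bar> \<le> ln (ln (s r / r))" by linarith
        have "- \<bar>ln (ln c)\<bar> \<le> - \<bar>ln (ln c)\<bar> / L r"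
          using elim by (simp add: divide_le_eq mult_le_cancel_left1 abs_ge_zero)
        also have "\<dots> \<le> ln (ln (s r / r)) / L r"
          using elim h by (intro divide_right_mono) auto
        finally show ?case by simp
      qed
    qed
    thus ?thesis by (rule less_le_trans[rotated]) simp
  qed
  have B_ge0: "B \<ge> 0"
    unfolding B_def beta_phi_def Lr[symmetric]
  proof (rule le_Limsup[OF nonbot])
    show "eventually (\<lambda>r. 0 \<le> ereal (ln (ln r) / L r)) at_top"
      using ev_basic by eventually_elim auto
  qed

  obtain a0 where a0: "A = ereal a0" "0 \<le> a0" "a0 \<le> 1" using A_ge0 A_le1 by (cases A) auto
  obtain g0 where g0: "G = ereal g0" using G_le1 G_gt by (cases G) auto
  define RN where "RN = (\<lambda>r. eln (N r) / ereal (L r))"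
  define Rn where "Rn = (\<lambda>r. eln (n r) / ereal (L r))"
  have QRN: "Q = Limsup at_top RN" unfolding Q_def RN_def rho_phi_def Lr by simp
  have PRn: "P = Limsup at_top Rn" unfolding P_def Rn_def rho_phi_def Lr by simp
  have mainthm: "Q \<le> P + B \<and> (if P = -\<infinity> then -\<infinity> else A * P) + A * G \<le> Q"
  proof (cases "\<forall>r. n r = 0")
    case True
    have N0: "N r = 0" if r: "r > 0" for r
    proof -
      have "real (\<Sum>z\<in>{z\<in>apoints f a. cmod z \<le> r}. amult f a z) = 0"
        using True[rule_format, of r] unfolding n_def ncount_def .
      hence "(\<Sum>z\<in>{z\<in>apoints f a. cmod z \<le> r}. amult f a z) = 0"
        by (simp only: of_nat_eq_0_iff)
      hence "\<forall>z\<in>{z\<in>apoints f a. cmod z \<le> r}. amult f a z = 0"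
        using fin[of r] by simp
      hence "(\<Sum>z\<in>{z\<in>apoints f a. cmod z \<le> r} - {0}. real (amult f a z) * ln (r / cmod z)) = 0"
        by (intro sum.neutral) auto
      thus ?thesis using Ncount_eq[OF fin r] True unfolding N_def n_def by simp
    qed
    have "Q \<le> -\<infinity>" unfolding QRN
    proof (rule Limsup_bounded)
      show "eventually (\<lambda>r. RN r \<le> -\<infinity>) at_top"
        using ev_basic
      proof eventually_elim
        case (elim r)
        hence "r > 0" "L r > 0" using R0 by auto
        thus ?case unfolding RN_def using N0 ratio_zero by simp
      qed
    qed
    hence Qm: "Q = -\<infinity>" by simp
    have "P \<le> -\<infinity>" unfolding PRn
    proof (rule Limsup_bounded)
      show "eventually (\<lambda>r. Rn r \<le> -\<infinity>) at_top"
        using ev_basic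
      proof eventually_elim
        case (elim r)
        hence "L r > 0" by auto
        thus ?case unfolding Rn_def using True ratio_zero by simp
      qed
    qed
    hence "P = -\<infinity>" by simp
    thus ?thesis using Qm a0 g0 by simp
  next
    case False
    then obtain r1 where r1: "n r1 \<noteq> 0" by auto
    define r2 where "r2 = max r1 1"
    have r2: "r2 \<ge> 1" "r1 \<le> r2" unfolding r2_def by auto
    have n_mono: "\<And>x y. x \<le> y \<Longrightarrow> n x \<le> n y" unfolding n_def by (rule ncount_mono[OF fin])
    have n_ge1: "n r \<ge> 1" if "r \<ge> r2" for r
    proof -
      have "n r1 > 0" using r1 ncount_nonneg[of f a r1] unfolding n_def by simp
      hence "n r > 0" using n_mono[of r1 r] that r2 by simp
      moreover obtain k :: nat where "n r = real k" unfolding n_def using ncount_nat by blast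
      ultimately show ?thesis by simp
    qed
    have N_ge1: "N r \<ge> 1" if "r \<ge> exp 1 * r2" for r
    proof -
      have "1 * r2 \<le> exp 1 * r2" by (rule mult_right_mono) (use r2 in auto)
      hence r2r: "r2 \<le> r" using that by simp
      have "N r \<ge> n r2 * ln (r / r2)" unfolding N_def n_def by (rule N_lower[OF fin r2(1) r2r])
      moreover have "ln (r / r2) \<ge> 1"
      proof -
        have "exp 1 \<le> r / r2" using that r2 by (simp add: le_divide_eq mult.commute)
        moreover have "r / r2 > 0" using r2r r2 by simp
        ultimately show ?thesis using ln_le_cancel_iff[of "exp 1" "r/r2"] by simp
      qed
      moreover have "1 * 1 \<le> n r2 * ln (r / r2)"
        by (rule mult_mono) (use n_ge1[of r2] \<open>ln (r / r2) \<ge> 1\<close> in auto)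
      ultimately show ?thesis by simp
    qed
    have ev2: "eventually (\<lambda>r. r \<ge> r2 \<and> n r \<ge> 1 \<and> N r \<ge> 1) at_top"
      using eventually_ge_at_top[of "exp 1 * r2"] eventually_ge_at_top[of r2]
    proof eventually_elim
      case (elim r)
      thus ?case using n_ge1[of r] N_ge1[of r] by simp
    qed
    have P_ge0: "P \<ge> 0" unfolding PRn
    proof (rule le_Limsup[OF nonbot])
      show "eventually (\<lambda>r. 0 \<le> Rn r) at_top"
        using ev_basic ev2
      proof eventually_elim
        case (elim r)
        thus ?case unfolding Rn_def using ratio_eq[of "n r" "L r"] by simp
      qed
    qed
    have conj1: "Q \<le> P + B"
    proof (cases "P + B = \<infinity>")
      case True show ?thesis by (subst True) simp
    next
      case False
      obtain p where p: "P = ereal p" using P_ge0 False by (cases P) auto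
      obtain b where b: "B = ereal b" using B_ge0 False p by (cases B) auto
      define K where "K = (\<Sum>z\<in>{z\<in>apoints f a. cmod z \<le> 1} - {0}. real (amult f a z) * max 0 (- ln (cmod z)))"
      have K0: "K \<ge> 0" unfolding K_def by (rule K_nonneg)
      have Nup: "N r \<le> n r * ln r + K" if "1 \<le> r" for r
        unfolding N_def n_def K_def by (rule N_upper[OF fin that])
      show ?thesis unfolding QRN
      proof (subst Limsup_le_iff, intro allI impI)
        fix y assume y: "P + B < y"
        obtain y' where y': "p + b < y'" "ereal y' \<le> y"
        proof (cases y)
          case (real yy) thus ?thesis using that[of yy] y p b by auto
        next
          case PInf thus ?thesis using that[of "p+b+1"] by auto
        next
          case MInf thus ?thesis using y by simp
        qed
        define \<epsilon> where "\<epsilon> = (y' - p - b) / 3"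
        have \<epsilon>p: "\<epsilon> > 0" using y' by (simp add: \<epsilon>_def)
        have "Limsup at_top Rn < ereal (p + \<epsilon>)" using PRn p \<epsilon>p by (simp flip: PRn)
        hence ev_n: "eventually (\<lambda>r. Rn r < ereal (p + \<epsilon>)) at_top" by (rule Limsup_lessD)
        have "Limsup at_top (\<lambda>r. ereal (ln (ln r) / L r)) < ereal (b + \<epsilon>)"
          using b \<epsilon>p unfolding B_def beta_phi_def Lr[symmetric] by simp
        hence ev_b: "eventually (\<lambda>r. ereal (ln (ln r) / L r) < ereal (b + \<epsilon>)) at_top" by (rule Limsup_lessD)
        have ev_K: "eventually (\<lambda>r. ln (1 + K) / L r < \<epsilon>) at_top"
          using evL[of "ln (1 + K) / \<epsilon> + 1"] evL[of 1]
        proof eventually_elim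
          case (elim r)
          have "\<epsilon> * (ln (1 + K) / \<epsilon> + 1) \<le> \<epsilon> * L r" using elim \<epsilon>p by (intro mult_left_mono) auto
          hence "ln (1 + K) + \<epsilon> \<le> \<epsilon> * L r" using \<epsilon>p by (simp add: distrib_left)
          hence "ln (1 + K) < L r * \<epsilon>" using \<epsilon>p by (simp add: mult.commute)
          thus ?case using elim by (simp add: pos_divide_less_eq mult.commute)
        qed
        show "eventually (\<lambda>r. RN r < y) at_top"
          using ev_basic ev2 ev_n ev_b ev_K
        proof eventually_elim
          case (elim r)
          have L0: "L r > 0" using elim by auto
          have r1: "r \<ge> 1" using elim exp_ge_add_one_self[of 1] by linarith
          have nr: "n r \<ge> 1" "N r \<ge> 1" "ln r \<ge> 1" using elim by auto
          have u: "ln (n r) / L r < p + \<epsilon>" using elim ratio_eq[of "n r" "L r"] L0 nr unfolding Rn_def by simp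
          have v: "ln (ln r) / L r < b + \<epsilon>" using elim by simp
          have nl: "n r * ln r \<ge> 1" using mult_mono[of 1 "n r" 1 "ln r"] nr by simp
          have "N r \<le> n r * ln r + K" using Nup r1 by simp
          also have "\<dots> \<le> n r * ln r + n r * ln r * K" using nl K0 mult_right_mono[of 1 "n r * ln r" K] by simp
          also have "\<dots> = n r * ln r * (1 + K)" by (simp add: algebra_simps)
          finally have "ln (N r) \<le> ln (n r * ln r * (1 + K))" using nr by simp
          also have "\<dots> = ln (n r) + ln (ln r) + ln (1 + K)" using nr K0 by (simp add: ln_mult)
          finally have "ln (N r) / L r \<le> (ln (n r) + ln (ln r) + ln (1 + K)) / L r"
            using L0 by (intro divide_right_mono) auto
          also have "\<dots> = ln (n r) / L r + ln (ln r) / L r + ln (1 + K) / L r" by (simp add: add_divide_distrib)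
          also have "\<dots> < y'"
          proof -
            have "p + \<epsilon> + (b + \<epsilon>) + \<epsilon> = y'" by (simp add: \<epsilon>_def field_simps)
            moreover have "ln (1 + K) / L r < \<epsilon>" using elim by simp
            ultimately show ?thesis using u v by linarith
          qed
          finally have "ereal (ln (N r) / L r) < ereal y'" by simp
          moreover have "RN r = ereal (ln (N r) / L r)" unfolding RN_def using ratio_eq[of "N r" "L r"] nr L0 by simp
          ultimately show ?case using y'(2) by (metis less_le_trans)
        qed
      qed
    qed
    have evRN0: "eventually (\<lambda>r. RN r \<ge> 0) at_top"
      using ev_basic ev2
    proof eventually_elim
      case (elim r)
      hence "RN r = ereal (ln (N r) / L r)" "N r \<ge> 1" "L r > 0" unfolding RN_def using ratio_eq[of "N r" "L r"] by auto
      thus ?case by simp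
    qed
    have core: "frequently (\<lambda>r. RN r > ereal (a' * (p' + g'))) at_top"
      if c: "0 < a'" "ereal a' < A" "ereal p' < P" "g' < g0" "0 < p' + g'" for a' p' g'
    proof -
      have ev_a: "eventually (\<lambda>r. ereal a' < ereal (L r / L (s r))) at_top"
        using less_LiminfD[OF c(2)[unfolded A_def alpha_phi_s_def Lr[symmetric]]] .
      have "ereal g' < Liminf at_top (\<lambda>r. ereal (ln (ln (s r / r)) / L r))"
        using c(4) g0 unfolding G_def gamma_phi_s_def Lr[symmetric] by simp
      hence ev_g: "eventually (\<lambda>r. ereal g' < ereal (ln (ln (s r / r)) / L r)) at_top"
        by (rule less_LiminfD)
      have fr_p: "frequently (\<lambda>r. Rn r > ereal p') at_top"
        using freq_of_Limsup[of "ereal p'" at_top Rn] c(3) PRn by simp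
      have "frequently (\<lambda>r. RN (s r) > ereal (a' * (p' + g'))) at_top"
        using frequently_eventually_frequently[OF fr_p eventually_conj[OF ev_basic eventually_conj[OF ev2 eventually_conj[OF ev_a ev_g]]]]
      proof (rule frequently_elim1)
        fix r assume H: "ereal p' < Rn r \<and> (R0 < r \<and> exp 1 \<le> r \<and> 1 \<le> L r \<and> r < s r \<and> s r \<le> r\<^sup>2 \<and>
             L r \<le> L (s r) \<and> 0 < \<phi> r \<and> 1 \<le> ln r) \<and> (r2 \<le> r \<and> 1 \<le> n r \<and> 1 \<le> N r) \<and>
             ereal a' < ereal (L r / L (s r)) \<and> ereal g' < ereal (ln (ln (s r / r)) / L r)"
        have L0: "L r > 0" "L (s r) > 0" using H by auto
        have r1: "1 \<le> r" using H exp_ge_add_one_self[of 1] by linarith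
        have nr: "n r \<ge> 1" using H by auto
        have r0: "r > 0" using r1 by simp
        have q1: "s r / r > 1" using H r0 by simp
        have u: "ln (n r) / L r > p'" using H ratio_eq[of "n r" "L r"] L0 nr unfolding Rn_def by simp
        have v: "ln (ln (s r / r)) / L r > g'" using H by simp
        have w: "L r / L (s r) > a'" using H by simp
        have lq: "ln (s r / r) > 0" using q1 by simp
        have "N (s r) \<ge> n r * ln (s r / r)" unfolding N_def n_def
          by (rule N_lower[OF fin r1]) (use H in auto)
        moreover have pos: "n r * ln (s r / r) > 0" using nr lq by simp
        ultimately have "ln (N (s r)) \<ge> ln (n r * ln (s r / r))" by simp
        also have "ln (n r * ln (s r / r)) = ln (n r) + ln (ln (s r / r))" using nr lq by (simp add: ln_mult)
        finally have "ln (N (s r)) / L (s r) \<ge> (ln (n r) + ln (ln (s r / r))) / L (s r)"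
          using L0 by (intro divide_right_mono) auto
        also have "(ln (n r) + ln (ln (s r / r))) / L (s r)
             = (ln (n r) / L r + ln (ln (s r / r)) / L r) * (L r / L (s r))"
          using L0 by (simp add: field_simps)
        finally have main: "ln (N (s r)) / L (s r) \<ge> (ln (n r) / L r + ln (ln (s r / r)) / L r) * (L r / L (s r))" .
        have "a' * (p' + g') < (L r / L (s r)) * (p' + g')" using w c(5) by (rule mult_strict_right_mono)
        also have "\<dots> < (L r / L (s r)) * (ln (n r) / L r + ln (ln (s r / r)) / L r)"
          using u v L0 by (intro mult_strict_left_mono) auto
        finally have "a' * (p' + g') < ln (N (s r)) / L (s r)" using main by (simp add: mult.commute)
        moreover have "N (s r) > 0" using \<open>N (s r) \<ge> _\<close> pos by linarith
        ultimately show "ereal (a' * (p' + g')) < RN (s r)"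
          unfolding RN_def using ratio_eq[of "N (s r)" "L (s r)"] L0 by simp
      qed
      moreover have "eventually (\<lambda>r. s r \<ge> r) at_top" using ev_basic by eventually_elim auto
      ultimately show ?thesis by (rule freq_transfer)
    qed
    have key: "frequently (\<lambda>r. RN r > y) at_top" if y: "y < A * P + A * G" for y
    proof (cases "y < 0")
      case True
      have "eventually (\<lambda>r. RN r > y) at_top"
        using evRN0 by eventually_elim (use True in auto)
      thus ?thesis by (intro eventually_frequently[OF nonbot])
    next
      case False
      hence y0: "y \<ge> 0" by simp
      have yfin: "y \<noteq> \<infinity>" using y by auto
      then obtain y0 where y0e: "y = ereal y0" "y0 \<ge> 0" using y0 by (cases y) auto
      have gt: "frequently (\<lambda>r. RN r > y) at_top"
        if "0 < a'" "ereal a' < A" "ereal p' < P" "g' < g0" "0 < p' + g'" "y0 \<le> a' * (p' + g')" for a' p' g'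
        using core[OF that(1-5)]
      proof (rule frequently_elim1)
        fix r assume "ereal (a' * (p' + g')) < RN r"
        moreover have "ereal y0 \<le> ereal (a' * (p' + g'))" using that(6) by simp
        ultimately show "y < RN r" using y0e(1) by (metis order.strict_trans1)
      qed
      show ?thesis
      proof (cases P)
        case PInf
        have "a0 > 0"
        proof (rule ccontr)
          assume "\<not> a0 > 0" hence "a0 = 0" using a0 by simp
          thus False using y y0 a0 g0 PInf by simp
        qed
        show ?thesis
        proof (rule gt[of "a0/2" "y0 / (a0/2) - (g0 - 1) + 1" "g0 - 1"])
          show "y0 \<le> a0 / 2 * (y0 / (a0 / 2) - (g0 - 1) + 1 + (g0 - 1))"
            using \<open>a0 > 0\<close> y0e by (simp add: field_simps)
          have "y0 / (a0 / 2) \<ge> 0" using \<open>a0 > 0\<close> y0e by simp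
          thus "0 < y0 / (a0 / 2) - (g0 - 1) + 1 + (g0 - 1)" by linarith
        qed (use \<open>a0 > 0\<close> a0 PInf in auto)
      next
        case (real p0)
        have p0: "p0 \<ge> 0" using P_ge0 real by simp
        define w where "w = p0 + g0"
        have yw: "y0 < a0 * w" using y y0e real a0 g0 by (simp add: w_def distrib_left)
        have apos: "a0 > 0"
        proof (rule ccontr)
          assume "\<not> a0 > 0" hence "a0 = 0" using a0 by simp
          thus False using yw y0e by simp
        qed
        have wpos: "w > 0"
        proof (rule ccontr)
          assume "\<not> w > 0" hence "a0 * w \<le> 0" using apos by (simp add: mult_nonneg_nonpos)
          thus False using yw y0e by simp
        qed
        define q where "q = y0 / (a0 * w)"
        have q: "0 \<le> q" "q < 1" using yw y0e apos wpos by (auto simp: q_def divide_less_eq)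
        define t where "t = (1 + q) / 2"
        have t: "0 < t" "t < 1" using q by (auto simp: t_def)
        have tt: "t * t \<ge> q"
        proof -
          have "t * t - q = (1 - q)^2 / 4" by (simp add: t_def power2_eq_square field_simps)
          moreover have "(1 - q)^2 / 4 \<ge> 0" by simp
          ultimately show ?thesis by linarith
        qed
        show ?thesis
        proof (rule gt[of "t * a0" "p0 - (1 - t) * w / 2" "g0 - (1 - t) * w / 2"])
          show "0 < t * a0" using t apos by simp
          show "ereal (t * a0) < A" using t apos a0 by simp
          show "ereal (p0 - (1 - t) * w / 2) < P" using t wpos real by simp
          show "g0 - (1 - t) * w / 2 < g0" using t wpos by simp
          have e: "p0 - (1 - t) * w / 2 + (g0 - (1 - t) * w / 2) = t * w" by (simp add: w_def algebra_simps)
          show "0 < p0 - (1 - t) * w / 2 + (g0 - (1 - t) * w / 2)" using e t wpos by simp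
          have "y0 = q * (a0 * w)" using apos wpos by (simp add: q_def)
          also have "\<dots> \<le> (t * t) * (a0 * w)" using tt apos wpos by (intro mult_right_mono) auto
          also have "\<dots> = t * a0 * (t * w)" by (simp add: algebra_simps)
          finally show "y0 \<le> t * a0 * (p0 - (1 - t) * w / 2 + (g0 - (1 - t) * w / 2))" using e by simp
        qed
      next
        case MInf thus ?thesis using P_ge0 by simp
      qed
    qed
    have conj2: "A * P + A * G \<le> Q"
    proof (rule ccontr)
      assume "\<not> A * P + A * G \<le> Q"
      hence "Q < A * P + A * G" by simp
      then obtain y where y: "Q < y" "y < A * P + A * G" using dense by blast
      have "Limsup at_top RN < y" using y(1) QRN by simp
      hence "eventually (\<lambda>r. RN r < y) at_top" by (rule Limsup_lessD)
      moreover have "frequently (\<lambda>r. RN r > y) at_top" by (rule key[OF y(2)])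
      ultimately have "frequently (\<lambda>r. RN r > y \<and> RN r < y) at_top"
        by (intro frequently_eventually_frequently)
      moreover have "eventually (\<lambda>x. y < RN x \<longrightarrow> \<not> RN x < y) at_top"
        by (rule always_eventually) (auto simp: not_less order.strict_implies_order)
      ultimately show False by (simp add: frequently_def)
    qed
    have "P \<noteq> -\<infinity>" using P_ge0 by auto
    thus ?thesis using conj1 conj2 by simp
  qed
  show ?thesis using mainthm unfolding P_def Q_def A_def G_def B_def n_def N_def .
qed

end
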